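(* Let $\alpha\in\mathbb R$, let $(\mathfrak g,\varphi,\xi,\eta,g)$ be an almost $\alpha$-coK\"ahler Lie algebra, and let $\mathfrak h=\ker\eta$, $J=\varphi|_{\mathfrak h}$, $h=g|_{\mathfrak h\times\mathfrak h}$, $D=\mathrm{ad}_\xi|_{\mathfrak h}$. Then the following are equivalent: (i) $\mathcal L_\xi g=2\alpha(g-\eta\otimes\eta)$; (ii) $D+\alpha I$ is skew-adjoint with respect to $h$; (iii) $DJ=JD$; (iv) $\mathcal L_\xi\varphi=0$. In particular, when $\alpha=0$, condition (i) says that $\xi$ is Killing ($\mathcal L_\xi g=0$), i.e. each of (i)–(iv) is equivalent to $(\mathfrak g,\varphi,\xi,\eta,g)$ being $K$-cosymplectic.
   Context: For a Lie algebra, $d\eta(x,y)=-\eta([x,y])$ and $d\omega(x,y,z)=-\omega([x,y],z)-\omega([y,z],x)-\omega([z,x],y)$. An almost contact metric structure on a $(2n+1)$-dimensional Lie algebra $\mathfrak g$ is $(\varphi,\xi,\eta,g)$ with $\eta\in\mathfrak g^*$, $\varphi\in\mathrm{End}(\mathfrak g)$, $\xi\in\mathfrak g$, $g$ positive definite, $\eta(\xi)=1$, $\varphi^2=-I+\eta\otimes\xi$, $\eta\circ\varphi=0$, $g(\varphi x,\varphi y)=g(x,y)-\eta(x)\eta(y)$; $\Phi(x,y)=g(x,\varphi y)$. It is almost $\alpha$-coK\"ahler if $\eta\wedge\Phi^n\neq0$, $d\eta=0$, $d\Phi=2\alpha\,\eta\wedge\Phi$; for $\alpha=0$ it is called almost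 coK\"ahler, and an almost coK\"ahler Lie algebra is $K$-cosymplectic if $\xi$ is Killing. Lie derivatives along $\xi$ are those of the corresponding left-invariant tensors: $(\mathcal L_\xi g)(x,y)=-g([\xi,x],y)-g(x,[\xi,y])$, $\mathcal L_\xi\varphi=\mathrm{ad}_\xi\circ\varphi-\varphi\circ\mathrm{ad}_\xi$. *)

theory Defs
  imports "HOL-Analysis.Analysis" "HOL-Combinatorics.Permutations"
begin

text \<open>A real Lie algebra structure (bracket br) on a finite-dimensional real vector space.
  The ambient inner product of the euclidean_space type is NOT used; the metric is g.\<close>
definition lie_algebra :: "('a::real_vector \<Rightarrow> 'a \<Rightarrow> 'a) \<Rightarrow> bool" where
  "lie_algebra br \<longleftrightarrow> bilinear br \<and> (\<forall>x. br x x = 0) \<and>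
     (\<forall>x y z. br x (br y z) + br y (br z x) + br z (br x y) = 0)"

definition almost_contact_metric ::
  "nat \<Rightarrow> ('a::euclidean_space \<Rightarrow> 'a) \<Rightarrow> 'a \<Rightarrow> ('a \<Rightarrow> real) \<Rightarrow> ('a \<Rightarrow> 'a \<Rightarrow> real) \<Rightarrow> bool" where
  "almost_contact_metric n \<phi> \<xi> \<eta> g \<longleftrightarrow>
     DIM('a) = 2 * n + 1 \<and> linear \<eta> \<and> linear \<phi> \<and> bilinear g \<and>
     (\<forall>x y. g x y = g y x) \<and> (\<forall>x. x \<noteq> 0 \<longrightarrow> g x x > 0) \<and>
     \<eta> \<xi> = 1 \<and> (\<forall>x. \<phi> (\<phi> x) = - x + \<eta> x *\<^sub>R \<xi>) \<and> (\<forall>x. \<eta> (\<phi> x) = 0) \<and>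
     (\<forall>x y. g (\<phi> x) (\<phi> y) = g x y - \<eta> x * \<eta> y)"

definition fund_form :: "('a \<Rightarrow> 'a \<Rightarrow> real) \<Rightarrow> ('a \<Rightarrow> 'a) \<Rightarrow> 'a \<Rightarrow> 'a \<Rightarrow> real" where
  "fund_form g \<phi> x y = g x (\<phi> y)"

text \<open>Chevalley--Eilenberg differentials of 1-forms and 2-forms.\<close>
definition d1 :: "('a \<Rightarrow> 'a \<Rightarrow> 'a) \<Rightarrow> ('a \<Rightarrow> real) \<Rightarrow> 'a \<Rightarrow> 'a \<Rightarrow> real" where
  "d1 br \<eta> x y = - \<eta> (br x y)"

definition d2 :: "('a \<Rightarrow> 'a \<Rightarrow> 'a) \<Rightarrow> ('a \<Rightarrow> 'a \<Rightarrow> real) \<Rightarrow> 'a \<Rightarrow> 'a \<Rightarrow> 'a \<Rightarrow> real" where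
  "d2 br \<omega> x y z = - \<omega> (br x y) z - \<omega> (br y z) x - \<omega> (br z x) y"

text \<open>Wedge of a 1-form and a 2-form (convention compatible with d2 above).\<close>
definition wedge12 :: "('a \<Rightarrow> real) \<Rightarrow> ('a \<Rightarrow> 'a \<Rightarrow> real) \<Rightarrow> 'a \<Rightarrow> 'a \<Rightarrow> 'a \<Rightarrow> real" where
  "wedge12 \<eta> \<omega> x y z = \<eta> x * \<omega> y z + \<eta> y * \<omega> z x + \<eta> z * \<omega> x y"

text \<open>The (2n+1)-form eta \<and> Phi^n, up to a nonzero normalisation constant, evaluated on
  the vectors x 0, ..., x (2n).\<close>
definition eta_wedge_Phi_pow ::
  "nat \<Rightarrow> ('a \<Rightarrow> real) \<Rightarrow> ('a \<Rightarrow> 'a \<Rightarrow> real) \<Rightarrow> (nat \<Rightarrow> 'a) \<Rightarrow> real" where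
  "eta_wedge_Phi_pow n \<eta> \<Phi> x =
     (\<Sum>\<sigma>\<in>{\<sigma>. \<sigma> permutes {..2*n}}.
        of_int (sign \<sigma>) * \<eta> (x (\<sigma> 0)) *
        (\<Prod>i<n. \<Phi> (x (\<sigma> (2*i+1))) (x (\<sigma> (2*i+2)))))"

definition almost_alpha_coKahler ::
  "real \<Rightarrow> nat \<Rightarrow> ('a::euclidean_space \<Rightarrow> 'a \<Rightarrow> 'a) \<Rightarrow> ('a \<Rightarrow> 'a) \<Rightarrow> 'a \<Rightarrow> ('a \<Rightarrow> real)
     \<Rightarrow> ('a \<Rightarrow> 'a \<Rightarrow> real) \<Rightarrow> bool" where
  "almost_alpha_coKahler \<alpha> n br \<phi> \<xi> \<eta> g \<longleftrightarrow>
     lie_algebra br \<and> almost_contact_metric n \<phi> \<xi> \<eta> g \<and>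
     (\<exists>x. eta_wedge_Phi_pow n \<eta> (fund_form g \<phi>) x \<noteq> 0) \<and>
     (\<forall>x y. d1 br \<eta> x y = 0) \<and>
     (\<forall>x y z. d2 br (fund_form g \<phi>) x y z = 2 * \<alpha> * wedge12 \<eta> (fund_form g \<phi>) x y z)"

definition almost_coKahler ::
  "nat \<Rightarrow> ('a::euclidean_space \<Rightarrow> 'a \<Rightarrow> 'a) \<Rightarrow> ('a \<Rightarrow> 'a) \<Rightarrow> 'a \<Rightarrow> ('a \<Rightarrow> real)
     \<Rightarrow> ('a \<Rightarrow> 'a \<Rightarrow> real) \<Rightarrow> bool" where
  "almost_coKahler n br \<phi> \<xi> \<eta> g \<longleftrightarrow> almost_alpha_coKahler 0 n br \<phi> \<xi> \<eta> g"

definition lie_deriv_metric :: "('a \<Rightarrow> 'a \<Rightarrow> 'a) \<Rightarrow> 'a \<Rightarrow> ('a \<Rightarrow> 'a \<Rightarrow> real) \<Rightarrow> 'a \<Rightarrow> 'a \<Rightarrow> real" where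
  "lie_deriv_metric br \<xi> g x y = - g (br \<xi> x) y - g x (br \<xi> y)"

definition lie_deriv_endo :: "('a::real_vector \<Rightarrow> 'a \<Rightarrow> 'a) \<Rightarrow> 'a \<Rightarrow> ('a \<Rightarrow> 'a) \<Rightarrow> 'a \<Rightarrow> 'a" where
  "lie_deriv_endo br \<xi> \<phi> x = br \<xi> (\<phi> x) - \<phi> (br \<xi> x)"

definition killing :: "('a \<Rightarrow> 'a \<Rightarrow> 'a) \<Rightarrow> 'a \<Rightarrow> ('a \<Rightarrow> 'a \<Rightarrow> real) \<Rightarrow> bool" where
  "killing br \<xi> g \<longleftrightarrow> (\<forall>x y. lie_deriv_metric br \<xi> g x y = 0)"

definition K_cosymplectic ::
  "nat \<Rightarrow> ('a::euclidean_space \<Rightarrow> 'a \<Rightarrow> 'a) \<Rightarrow> ('a \<Rightarrow> 'a) \<Rightarrow> 'a \<Rightarrow> ('a \<Rightarrow> real)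
     \<Rightarrow> ('a \<Rightarrow> 'a \<Rightarrow> real) \<Rightarrow> bool" where
  "K_cosymplectic n br \<phi> \<xi> \<eta> g \<longleftrightarrow> almost_coKahler n br \<phi> \<xi> \<eta> g \<and> killing br \<xi> g"

definition skew_adjoint_on :: "'a set \<Rightarrow> ('a \<Rightarrow> 'a \<Rightarrow> real) \<Rightarrow> ('a \<Rightarrow> 'a) \<Rightarrow> bool" where
  "skew_adjoint_on V h T \<longleftrightarrow> (\<forall>x\<in>V. \<forall>y\<in>V. h (T x) y = - h x (T y))"

end

theory Submission
  imports Defs
begin

theorem mainTheorem5:
  fixes \<alpha> :: real and n :: nat
    and br :: "'a::euclidean_space \<Rightarrow> 'a \<Rightarrow> 'a"
    and \<phi> :: "'a \<Rightarrow> 'a" and \<xi> :: 'a and \<eta> :: "'a \<Rightarrow> real" and g :: "'a \<Rightarrow> 'a \<Rightarrow> real"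
  assumes "almost_alpha_coKahler \<alpha> n br \<phi> \<xi> \<eta> g"
  defines "\<hh> \<equiv> {x. \<eta> x = 0}"
  shows "((\<forall>x y. lie_deriv_metric br \<xi> g x y = 2 * \<alpha> * (g x y - \<eta> x * \<eta> y))
           \<longleftrightarrow> skew_adjoint_on \<hh> g (\<lambda>x. br \<xi> x + \<alpha> *\<^sub>R x))
       \<and> (skew_adjoint_on \<hh> g (\<lambda>x. br \<xi> x + \<alpha> *\<^sub>R x)
           \<longleftrightarrow> (\<forall>x\<in>\<hh>. br \<xi> (\<phi> x) = \<phi> (br \<xi> x)))
       \<and> ((\<forall>x\<in>\<hh>. br \<xi> (\<phi> x) = \<phi> (br \<xi> x))
           \<longleftrightarrow> (\<forall>x. lie_deriv_endo br \<xi> \<phi> x = 0))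
       \<and> (\<alpha> = 0 \<longrightarrow>
           ((\<forall>x y. lie_deriv_metric br \<xi> g x y = 2 * \<alpha> * (g x y - \<eta> x * \<eta> y))
             \<longleftrightarrow> K_cosymplectic n br \<phi> \<xi> \<eta> g))"
proof -
  have LA: "lie_algebra br" and ACM: "almost_contact_metric n \<phi> \<xi> \<eta> g"
    and d1z: "\<And>x y. d1 br \<eta> x y = 0"
    and d2e: "\<And>x y z. d2 br (fund_form g \<phi>) x y z = 2 * \<alpha> * wedge12 \<eta> (fund_form g \<phi>) x y z"
    using assms(1) unfolding almost_alpha_coKahler_def by auto
  have brB: "bilinear br" and brxx: "\<And>x. br x x = 0" using LA unfolding lie_algebra_def by auto
  have etaL: "linear \<eta>" and phiL: "linear \<phi>" and gB: "bilinear g"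
    and gsym: "\<And>x y. g x y = g y x" and gpos: "\<And>x. x \<noteq> 0 \<Longrightarrow> g x x > 0"
    and etaxi: "\<eta> \<xi> = 1" and phi2: "\<And>x. \<phi> (\<phi> x) = - x + \<eta> x *\<^sub>R \<xi>"
    and etaphi: "\<And>x. \<eta> (\<phi> x) = 0"
    and comp: "\<And>x y. g (\<phi> x) (\<phi> y) = g x y - \<eta> x * \<eta> y"
    using ACM unfolding almost_contact_metric_def by auto
  note gs = bilinear_ladd[OF gB] bilinear_radd[OF gB] bilinear_lmul[OF gB] bilinear_rmul[OF gB]
    bilinear_lsub[OF gB] bilinear_rsub[OF gB] bilinear_lneg[OF gB] bilinear_rneg[OF gB]
    bilinear_lzero[OF gB] bilinear_rzero[OF gB]
  note bs = bilinear_ladd[OF brB] bilinear_radd[OF brB] bilinear_lmul[OF brB] bilinear_rmul[OF brB]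
    bilinear_lsub[OF brB] bilinear_rsub[OF brB] bilinear_rzero[OF brB] bilinear_lzero[OF brB]
  note ls = linear_add[OF etaL] linear_scale[OF etaL] linear_diff[OF etaL] linear_neg[OF etaL]
    linear_add[OF phiL] linear_scale[OF phiL] linear_diff[OF phiL] linear_0[OF phiL] linear_neg[OF phiL]
  have phixi: "\<phi> \<xi> = 0"
  proof -
    have a: "\<phi> (\<phi> \<xi>) = 0" using phi2[of \<xi>] etaxi by simp
    have "\<phi> (\<phi> (\<phi> \<xi>)) = - \<phi> \<xi>" using phi2[of "\<phi> \<xi>"] etaphi by simp
    moreover have "\<phi> (\<phi> (\<phi> \<xi>)) = 0" using a ls by simp
    ultimately show ?thesis by simp
  qed
  have gxi: "\<And>x. g x \<xi> = \<eta> x"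
  proof -
    fix x show "g x \<xi> = \<eta> x" using comp[of x \<xi>] phixi etaxi gs by simp
  qed
  have gphi: "\<And>x y. g x (\<phi> y) = - g (\<phi> x) y"
  proof -
    fix x y
    have "g (\<phi> x) (\<phi> (\<phi> y)) = g x (\<phi> y)" using comp[of x "\<phi> y"] etaphi by simp
    moreover have "g (\<phi> x) (\<phi> (\<phi> y)) = - g (\<phi> x) y"
      using phi2[of y] gs gxi etaphi by simp
    ultimately show "g x (\<phi> y) = - g (\<phi> x) y" by simp
  qed
  have etabr: "\<And>x y. \<eta> (br x y) = 0" using d1z unfolding d1_def by simp
  have anti: "\<And>x y. br y x = - br x y"
  proof -
    fix x y
    have "br (x+y) (x+y) = br x x + br x y + br y x + br y y"
      by (simp add: bs algebra_simps)
    hence "br x y + br y x = 0" by (simp add: brxx)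
    thus "br y x = - br x y" by (simp add: eq_neg_iff_add_eq_0 add.commute)
  qed
  have Dxi: "br \<xi> \<xi> = 0" by (rule brxx)
  have star: "\<And>y z. g (br \<xi> z) (\<phi> y) - g (br \<xi> y) (\<phi> z) = 2 * \<alpha> * g y (\<phi> z)"
  proof -
    fix y z
    have "d2 br (fund_form g \<phi>) \<xi> y z = 2 * \<alpha> * wedge12 \<eta> (fund_form g \<phi>) \<xi> y z" by (rule d2e)
    moreover have "g \<xi> (\<phi> y) = 0" using gsym gxi etaphi by metis
    ultimately show "?thesis y z"
      unfolding d2_def wedge12_def fund_form_def using phixi gs anti[of \<xi> z] etaxi by simp
  qed
  have posdef: "\<And>w. (\<And>z. g w z = 0) \<Longrightarrow> w = 0"
    using gpos by (metis less_irrefl)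
  have dec: "\<And>x. x = (x - \<eta> x *\<^sub>R \<xi>) + \<eta> x *\<^sub>R \<xi>" by simp
  have decH: "\<And>x. \<eta> (x - \<eta> x *\<^sub>R \<xi>) = 0" using ls etaxi by simp
  have I_II: "(\<forall>x y. lie_deriv_metric br \<xi> g x y = 2 * \<alpha> * (g x y - \<eta> x * \<eta> y))
           \<longleftrightarrow> skew_adjoint_on \<hh> g (\<lambda>x. br \<xi> x + \<alpha> *\<^sub>R x)"
  proof
    assume H: "\<forall>x y. lie_deriv_metric br \<xi> g x y = 2 * \<alpha> * (g x y - \<eta> x * \<eta> y)"
    show "skew_adjoint_on \<hh> g (\<lambda>x. br \<xi> x + \<alpha> *\<^sub>R x)"
      unfolding skew_adjoint_on_def \<hh>_def
    proof (intro ballI)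
      fix x y assume "x \<in> {x. \<eta> x = 0}" "y \<in> {x. \<eta> x = 0}"
      hence "\<eta> x = 0" "\<eta> y = 0" by auto
      thus "g (br \<xi> x + \<alpha> *\<^sub>R x) y = - g x (br \<xi> y + \<alpha> *\<^sub>R y)"
        using H[rule_format, of x y] unfolding lie_deriv_metric_def using gs
        by (simp add: algebra_simps)
    qed
  next
    assume H: "skew_adjoint_on \<hh> g (\<lambda>x. br \<xi> x + \<alpha> *\<^sub>R x)"
    show "\<forall>x y. lie_deriv_metric br \<xi> g x y = 2 * \<alpha> * (g x y - \<eta> x * \<eta> y)"
    proof (intro allI)
      fix x y
      define x0 where "x0 = x - \<eta> x *\<^sub>R \<xi>"
      define y0 where "y0 = y - \<eta> y *\<^sub>R \<xi>"
      have hx: "\<eta> x0 = 0" and hy: "\<eta> y0 = 0" unfolding x0_def y0_def using decH by auto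
      have ex: "x = x0 + \<eta> x *\<^sub>R \<xi>" and ey: "y = y0 + \<eta> y *\<^sub>R \<xi>" unfolding x0_def y0_def by auto
      have sk: "g (br \<xi> x0 + \<alpha> *\<^sub>R x0) y0 = - g x0 (br \<xi> y0 + \<alpha> *\<^sub>R y0)"
        using H hx hy unfolding skew_adjoint_on_def \<hh>_def by auto
      have g1: "g (br \<xi> x) y = g (br \<xi> x0) y0"
        by (subst ex, subst ey) (simp add: gs bs Dxi gxi etabr)
      have g2: "g x (br \<xi> y) = g x0 (br \<xi> y0)"
        by (subst ex, subst ey) (simp add: gs bs Dxi gxi etabr gsym[of \<xi>])
      have g3: "g x y = g x0 y0 + \<eta> x * \<eta> y"
        by (subst (1) ex, subst (1) ey) (simp add: gs gxi gsym[of \<xi>] hx hy etaxi ls)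
      show "lie_deriv_metric br \<xi> g x y = 2 * \<alpha> * (g x y - \<eta> x * \<eta> y)"
        unfolding lie_deriv_metric_def g1 g2 g3 using sk gs by (simp add: algebra_simps)
    qed
  qed
  have II_III: "skew_adjoint_on \<hh> g (\<lambda>x. br \<xi> x + \<alpha> *\<^sub>R x)
           \<longleftrightarrow> (\<forall>x\<in>\<hh>. br \<xi> (\<phi> x) = \<phi> (br \<xi> x))"
  proof
    assume H: "skew_adjoint_on \<hh> g (\<lambda>x. br \<xi> x + \<alpha> *\<^sub>R x)"
    show "\<forall>x\<in>\<hh>. br \<xi> (\<phi> x) = \<phi> (br \<xi> x)"
    proof
      fix y assume "y \<in> \<hh>"
      define w where "w = br \<xi> (\<phi> y) - \<phi> (br \<xi> y)"
      have "\<And>z. g w z = 0"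
      proof -
        fix z
        define z0 where "z0 = z - \<eta> z *\<^sub>R \<xi>"
        have hz: "\<eta> z0 = 0" unfolding z0_def using decH by auto
        have ez: "z = z0 + \<eta> z *\<^sub>R \<xi>" unfolding z0_def by auto
        have wxi: "g w \<xi> = 0" unfolding w_def using gxi ls etabr etaphi by simp
        have sk: "g (br \<xi> z0 + \<alpha> *\<^sub>R z0) (\<phi> y) = - g z0 (br \<xi> (\<phi> y) + \<alpha> *\<^sub>R (\<phi> y))"
          using H hz etaphi unfolding skew_adjoint_on_def \<hh>_def by auto
        have st: "g (br \<xi> z0) (\<phi> y) - g (br \<xi> y) (\<phi> z0) = 2 * \<alpha> * g y (\<phi> z0)" by (rule star)
        have a1: "g (br \<xi> y) (\<phi> z0) = - g (\<phi> (br \<xi> y)) z0" by (rule gphi)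
        have a2: "g y (\<phi> z0) = - g (\<phi> y) z0" by (rule gphi)
        have a3: "g z0 (\<phi> y) = g (\<phi> y) z0" by (rule gsym)
        have a4: "g z0 (br \<xi> (\<phi> y)) = g (br \<xi> (\<phi> y)) z0" by (rule gsym)
        have wd: "g w z0 = g (br \<xi> (\<phi> y)) z0 - g (\<phi> (br \<xi> y)) z0"
          unfolding w_def by (rule bilinear_lsub[OF gB])
        have wz0: "g w z0 = 0" using wd sk st a1 a2 a3 a4 gs
          by (simp add: algebra_simps)
        show "g w z = 0" by (subst ez) (simp add: gs wz0 wxi)
      qed
      hence "w = 0" by (rule posdef)
      thus "br \<xi> (\<phi> y) = \<phi> (br \<xi> y)" unfolding w_def by simp
    qed
  next
    assume H: "\<forall>x\<in>\<hh>. br \<xi> (\<phi> x) = \<phi> (br \<xi> x)"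
    show "skew_adjoint_on \<hh> g (\<lambda>x. br \<xi> x + \<alpha> *\<^sub>R x)"
      unfolding skew_adjoint_on_def
    proof (intro ballI)
      fix x y assume xh: "x \<in> \<hh>" and yh: "y \<in> \<hh>"
      hence hx: "\<eta> x = 0" and hy: "\<eta> y = 0" unfolding \<hh>_def by auto
      have py: "\<phi> (\<phi> y) = - y" using phi2[of y] hy by simp
      have st: "g (br \<xi> x) (\<phi> (\<phi> y)) - g (br \<xi> (\<phi> y)) (\<phi> x) = 2 * \<alpha> * g (\<phi> y) (\<phi> x)" by (rule star)
      have c: "br \<xi> (\<phi> y) = \<phi> (br \<xi> y)" using H yh by auto
      have c1: "g (\<phi> (br \<xi> y)) (\<phi> x) = g (br \<xi> y) x" using comp[of "br \<xi> y" x] hx by simp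
      have c2: "g (\<phi> y) (\<phi> x) = g y x" using comp[of y x] hx by simp
      have e: "g (br \<xi> x) y = - g (br \<xi> y) x - 2 * \<alpha> * g y x"
        using st unfolding py c c1 c2 using gs by (simp add: algebra_simps)
      show "g (br \<xi> x + \<alpha> *\<^sub>R x) y = - g x (br \<xi> y + \<alpha> *\<^sub>R y)"
        using e gs gsym[of "br \<xi> y" x] gsym[of y x] by (simp add: algebra_simps)
    qed
  qed
  have III_IV: "(\<forall>x\<in>\<hh>. br \<xi> (\<phi> x) = \<phi> (br \<xi> x))
           \<longleftrightarrow> (\<forall>x. lie_deriv_endo br \<xi> \<phi> x = 0)"
  proof
    assume H: "\<forall>x\<in>\<hh>. br \<xi> (\<phi> x) = \<phi> (br \<xi> x)"
    show "\<forall>x. lie_deriv_endo br \<xi> \<phi> x = 0"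
    proof
      fix x
      define x0 where "x0 = x - \<eta> x *\<^sub>R \<xi>"
      have hx: "x0 \<in> \<hh>" unfolding x0_def \<hh>_def using decH by auto
      have ex: "x = x0 + \<eta> x *\<^sub>R \<xi>" unfolding x0_def by auto
      have "br \<xi> (\<phi> x) = br \<xi> (\<phi> x0)" by (subst ex) (simp add: ls bs phixi)
      moreover have "br \<xi> x = br \<xi> x0" by (subst ex) (simp add: bs Dxi)
      ultimately show "lie_deriv_endo br \<xi> \<phi> x = 0"
        unfolding lie_deriv_endo_def using H hx by simp
    qed
  next
    assume H: "\<forall>x. lie_deriv_endo br \<xi> \<phi> x = 0"
    thus "\<forall>x\<in>\<hh>. br \<xi> (\<phi> x) = \<phi> (br \<xi> x)" unfolding lie_deriv_endo_def by simp
  qed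
  have IV: "\<alpha> = 0 \<longrightarrow>
           ((\<forall>x y. lie_deriv_metric br \<xi> g x y = 2 * \<alpha> * (g x y - \<eta> x * \<eta> y))
             \<longleftrightarrow> K_cosymplectic n br \<phi> \<xi> \<eta> g)"
    using assms(1) unfolding K_cosymplectic_def almost_coKahler_def killing_def by auto
  show ?thesis using I_II II_III III_IV IV by blast
qed

end
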